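(* Let $n\ge1$. For every homogeneous polynomial $w\in\mathbb{Z}\langle\mathbf{a},\mathbf{b}\rangle$ of degree $n-1$, $$\Theta(w)=(1-q)^n\cdot[n]!\cdot \mathrm{ps}^*(\gamma(w)).$$ Consequently, for every graded poset $P$ of rank $n$, $$\Theta(\Psi(P))=(1-q)^n\cdot[n]!\cdot\mathrm{ps}^*(F(P)).$$
   Context: $\mathbf{a},\mathbf{b}$ are non-commuting variables. The Major MacMahon map $\Theta:\mathbb{Z}\langle\mathbf{a},\mathbf{b}\rangle\to\mathbb{Z}[q]$ is linear with $\Theta(u_1\cdots u_m)=\prod_{i:\,u_i=\mathbf{b}}q^i$ on monomials. $[m]=1+q+\cdots+q^{m-1}$, $[m]!=[m]\cdots[1]$. $\mathrm{QSym}$ is the algebra of quasi-symmetric functions in variables $t_1,t_2,\dots$, with monomial basis $M_\alpha=\sum_{i_1<\cdots<i_k}t_{i_1}^{\alpha_1}\cdots t_{i_k}^{\alpha_k}$ for compositions $\alpha=(\alpha_1,\dots,\alpha_k)$. For a composition $\alpha$ of $n$, let $v_\alpha=(\mathbf{a}-\mathbf{b})^{\alpha_1-1}\mathbf{b}(\mathbf{a}-\mathbf{b})^{\alpha_2-1}\mathbf{b}\cdots\mathbf{b}(\mathbf{a}-\mathbf{b})^{\alpha_k-1}$ (degree $n-1$); $\gamma:\mathbb{Z}\langle\mathbf{a},\mathbf{b}\rangle\to\mathrm{QSym}$ is the linear map with $\gamma(v_\alpha)=M_\alpha$. The stable principal specialization is $\mathrm{ps}(f)=f(1,q,q^2,\dots)\in\mathbb{Z}[[q]]$.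 The reversal $\alpha^*=(\alpha_k,\dots,\alpha_1)$ induces the linear map $f\mapsto f^*$ on $\mathrm{QSym}$ with $M_\alpha^*=M_{\alpha^*}$, and $\mathrm{ps}^*(f)=\mathrm{ps}(f^* )$. For a graded poset $P$ of rank $m+1$ with minimum $\hat0$, maximum $\hat1$, rank function $\rho$, the $\mathbf{a}\mathbf{b}$-index is $\Psi(P)=\sum_{S\subseteq\{1,\dots,m\}} f_S\, v_S$, where for $S=\{s_1<\cdots<s_k\}$, $f_S$ counts chains $\hat0<x_1<\cdots<x_k<\hat1$ with $\rho(x_i)=s_i$ and $v_S=v_1\cdots v_m$ with $v_i=\mathbf{b}$ if $i\in S$, $v_i=\mathbf{a}-\mathbf{b}$ otherwise. The quasi-symmetric function of $P$ is $F(P)=\gamma(\Psi(P))$; equivalently $F(P)=\lim_{k\to\infty}\sum_{\hat0=x_0\le x_1\le\cdots\le x_k=\hat1}t_1^{\rho(x_1)-\rho(x_0)}\cdots t_k^{\rho(x_k)-\rho(x_{k-1})}$. *)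

theory Defs
  imports "HOL-Computational_Algebra.Computational_Algebra"
begin

text \<open>Non-commutative polynomials in a, b over the integers are represented by their
  coefficient functions on words: a word is a bool list, True = letter b, False = letter a.\<close>
type_synonym ncpoly = "bool list \<Rightarrow> int"

definition homogeneous :: "nat \<Rightarrow> ncpoly \<Rightarrow> bool" where
  "homogeneous d w \<longleftrightarrow> (\<forall>u. w u \<noteq> 0 \<longrightarrow> length u = d)"

definition maj_exp :: "bool list \<Rightarrow> nat" where
  "maj_exp u = (\<Sum>i<length u. if u ! i then i + 1 else 0)"

definition Theta :: "ncpoly \<Rightarrow> int poly" where
  "Theta w = (\<Sum>u\<in>{u. w u \<noteq> 0}. monom (w u) (maj_exp u))"

definition qint :: "nat \<Rightarrow> int poly" where
  "qint m = (\<Sum>i<m. monom 1 i)"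

definition qfact :: "nat \<Rightarrow> int poly" where
  "qfact n = (\<Prod>i\<in>{1..n}. qint i)"

definition is_comp :: "nat list \<Rightarrow> bool" where
  "is_comp \<alpha> \<longleftrightarrow> \<alpha> \<noteq> [] \<and> 0 \<notin> set \<alpha>"

text \<open>Pattern of v_alpha: True stands for the factor b, False for the factor (a - b).\<close>
fun vpat :: "nat list \<Rightarrow> bool list" where
  "vpat [] = []"
| "vpat [k] = replicate (k - 1) False"
| "vpat (k # l # ls) = replicate (k - 1) False @ [True] @ vpat (l # ls)"

text \<open>Coefficient of letter x in the factor p (b if p, a - b otherwise).\<close>
definition lcoef :: "bool \<Rightarrow> bool \<Rightarrow> int" where
  "lcoef p x = (if p then (if x then 1 else 0) else (if x then -1 else 1))"

text \<open>Coefficient of the monomial u in the product of factors given by pattern p.\<close>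
definition patcoef :: "bool list \<Rightarrow> ncpoly" where
  "patcoef p u = (if length u = length p then (\<Prod>i<length p. lcoef (p ! i) (u ! i)) else 0)"

definition v_comp :: "nat list \<Rightarrow> ncpoly" where
  "v_comp \<alpha> = patcoef (vpat \<alpha>)"

text \<open>Quasi-symmetric functions are represented by their coefficients in the monomial
  basis M_alpha (finitely supported functions on compositions).  gamma w is the unique
  coefficient family c with w = sum of c alpha * v_alpha.\<close>
type_synonym qsym = "nat list \<Rightarrow> int"

definition gamma :: "ncpoly \<Rightarrow> qsym" where
  "gamma w = (THE c. finite {\<alpha>. c \<alpha> \<noteq> 0} \<and> (\<forall>\<alpha>. c \<alpha> \<noteq> 0 \<longrightarrow> is_comp \<alpha>) \<and>
                 (\<forall>u. w u = (\<Sum>\<alpha>\<in>{\<alpha>. c \<alpha> \<noteq> 0}. c \<alpha> * v_comp \<alpha> u)))"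

text \<open>Stable principal specialization of M_alpha: t_i = q^(i-1); the coefficient of q^m
  counts the sequences 0 <= j_1 < ... < j_k with sum of alpha_l * j_l = m.\<close>
definition psM :: "nat list \<Rightarrow> int fps" where
  "psM \<alpha> = Abs_fps (\<lambda>m. int (card {j :: nat list. length j = length \<alpha> \<and> sorted_wrt (<) j \<and>
                 (\<Sum>i<length \<alpha>. \<alpha> ! i * j ! i) = m}))"

definition ps :: "qsym \<Rightarrow> int fps" where
  "ps f = (\<Sum>\<alpha>\<in>{\<alpha>. f \<alpha> \<noteq> 0}. fps_const (f \<alpha>) * psM \<alpha>)"

definition qsym_rev :: "qsym \<Rightarrow> qsym" where
  "qsym_rev f = (\<lambda>\<alpha>. f (rev \<alpha>))"

definition ps_star :: "qsym \<Rightarrow> int fps" where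
  "ps_star f = ps (qsym_rev f)"

definition covers :: "'a set \<Rightarrow> ('a \<Rightarrow> 'a \<Rightarrow> bool) \<Rightarrow> 'a \<Rightarrow> 'a \<Rightarrow> bool" where
  "covers P le x y \<longleftrightarrow> le x y \<and> x \<noteq> y \<and> \<not> (\<exists>c\<in>P. le x c \<and> le c y \<and> c \<noteq> x \<and> c \<noteq> y)"

definition graded_poset ::
  "'a set \<Rightarrow> ('a \<Rightarrow> 'a \<Rightarrow> bool) \<Rightarrow> 'a \<Rightarrow> 'a \<Rightarrow> ('a \<Rightarrow> nat) \<Rightarrow> nat \<Rightarrow> bool" where
  "graded_poset P le z t \<rho> n \<longleftrightarrow>
     finite P \<and> z \<in> P \<and> t \<in> P \<and>
     (\<forall>x\<in>P. le x x) \<and>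
     (\<forall>x\<in>P. \<forall>y\<in>P. le x y \<and> le y x \<longrightarrow> x = y) \<and>
     (\<forall>x\<in>P. \<forall>y\<in>P. \<forall>c\<in>P. le x y \<and> le y c \<longrightarrow> le x c) \<and>
     (\<forall>x\<in>P. le z x \<and> le x t) \<and>
     \<rho> z = 0 \<and> \<rho> t = n \<and>
     (\<forall>x\<in>P. \<forall>y\<in>P. covers P le x y \<longrightarrow> \<rho> y = \<rho> x + 1)"

definition flag_number :: "'a set \<Rightarrow> ('a \<Rightarrow> 'a \<Rightarrow> bool) \<Rightarrow> ('a \<Rightarrow> nat) \<Rightarrow> nat set \<Rightarrow> nat" where
  "flag_number P le \<rho> S = card {C. C \<subseteq> P \<and> (\<forall>x\<in>C. \<forall>y\<in>C. le x y \<or> le y x) \<and>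
                                   inj_on \<rho> C \<and> \<rho> ` C = S}"

definition v_set :: "nat \<Rightarrow> nat set \<Rightarrow> ncpoly" where
  "v_set m S = patcoef (map (\<lambda>i. i + 1 \<in> S) [0..<m])"

definition Psi :: "'a set \<Rightarrow> ('a \<Rightarrow> 'a \<Rightarrow> bool) \<Rightarrow> ('a \<Rightarrow> nat) \<Rightarrow> nat \<Rightarrow> ncpoly" where
  "Psi P le \<rho> n = (\<lambda>u. \<Sum>S\<in>Pow {1..n - 1}. int (flag_number P le \<rho> S) * v_set (n - 1) S u)"

definition Fqs :: "'a set \<Rightarrow> ('a \<Rightarrow> 'a \<Rightarrow> bool) \<Rightarrow> ('a \<Rightarrow> nat) \<Rightarrow> nat \<Rightarrow> qsym" where
  "Fqs P le \<rho> n = gamma (Psi P le \<rho> n)"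

end

theory Submission
  imports Defs
begin


fun unpat :: "bool list \<Rightarrow> nat list" where
  "unpat [] = [1]"
| "unpat (True # p) = 1 # unpat p"
| "unpat (False # p) = (case unpat p of [] \<Rightarrow> [] | k # ks \<Rightarrow> Suc k # ks)"

lemma unpat_ne: "unpat p \<noteq> []"
  by (induction p rule: unpat.induct) (auto split: list.split)

lemma unpat_comp: "is_comp (unpat p) \<and> sum_list (unpat p) = Suc (length p)"
proof (induction p rule: unpat.induct)
  case (3 p)
  then show ?case using unpat_ne[of p] by (auto simp: is_comp_def split: list.split)
qed (auto simp: is_comp_def)

lemma vpat_cons: "vpat (k # xs) = (if xs = [] then replicate (k-1) False else replicate (k-1) False @ True # vpat xs)"
  by (cases xs) auto

lemma vpat_unpat: "vpat (unpat p) = p"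
proof (induction p rule: unpat.induct)
  case (3 p)
  obtain k ks where e: "unpat p = k # ks" using unpat_ne[of p] by (cases "unpat p") auto
  have k: "k \<ge> 1" using unpat_comp[of p] e by (auto simp: is_comp_def)
  have r: "replicate k False = False # replicate (k-1) False" using k by (cases k) auto
  show ?case using 3 e r by (auto simp: vpat_cons split: if_splits)
qed (auto simp: vpat_cons)

lemma unpat_rep: "unpat (replicate j False @ q) = (hd (unpat q) + j) # tl (unpat q)"
proof (induction j)
  case 0 then show ?case using unpat_ne[of q] by (cases "unpat q") auto
next
  case (Suc j) then show ?case by simp
qed

lemma unpat_vpat: "is_comp \<beta> \<Longrightarrow> unpat (vpat \<beta>) = \<beta>"
proof (induction \<beta> rule: vpat.induct)
  case 1 then show ?case by (simp add: is_comp_def)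
next
  case (2 k) then show ?case using unpat_rep[of "k-1" "[]"] by (auto simp: is_comp_def)
next
  case (3 k l ls)
  have "is_comp (l # ls)" using 3(2) by (auto simp: is_comp_def)
  with 3 show ?case using unpat_rep[of "k-1" "True # vpat (l # ls)"] by (auto simp: is_comp_def)
qed

lemma length_vpat: "is_comp \<beta> \<Longrightarrow> length (vpat \<beta>) = sum_list \<beta> - 1"
proof (induction \<beta> rule: vpat.induct)
  case (3 k l ls)
  have "is_comp (l # ls)" using 3(2) by (auto simp: is_comp_def)
  with 3 show ?case by (auto simp: is_comp_def)
qed (auto simp: is_comp_def)

definition Cn :: "nat \<Rightarrow> nat list set" where
  "Cn n = {\<beta>. is_comp \<beta> \<and> sum_list \<beta> = n}"

definition Lm :: "nat \<Rightarrow> bool list set" where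
  "Lm m = {x. length x = m}"

lemma finite_Lm: "finite (Lm m)"
  using finite_lists_length_eq[of "UNIV :: bool set" m] by (simp add: Lm_def)

lemma sum_comp_pos: "is_comp \<beta> \<Longrightarrow> sum_list \<beta> \<ge> 1"
  by (cases \<beta>) (auto simp: is_comp_def)

lemma bij_vpat: "bij_betw vpat (Cn (Suc m)) (Lm m)"
  apply (rule bij_betw_byWitness[where f' = unpat])
  using unpat_vpat vpat_unpat unpat_comp length_vpat
  by (auto simp: Cn_def Lm_def)

lemma finite_Cn: "finite (Cn (Suc m))"
  using bij_betw_finite[OF bij_vpat] finite_Lm by blast



lemma Lm_Suc: "Lm (Suc m) = (\<lambda>(b,x). b # x) ` (UNIV \<times> Lm m)"
  by (auto simp: Lm_def image_iff length_Suc_conv)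

lemma sum_prod_lists:
  fixes f :: "nat \<Rightarrow> bool \<Rightarrow> 'a::comm_semiring_1"
  shows "(\<Sum>x\<in>Lm m. \<Prod>i<m. f i (x!i)) = (\<Prod>i<m. f i True + f i False)"
proof (induction m arbitrary: f)
  case 0 then show ?case by (simp add: Lm_def)
next
  case (Suc m)
  have inj: "inj_on (\<lambda>(b,x). b # x) (UNIV \<times> Lm m)" by (auto simp: inj_on_def)
  have "(\<Sum>x\<in>Lm (Suc m). \<Prod>i<Suc m. f i (x!i))
      = (\<Sum>(b,x)\<in>UNIV \<times> Lm m. f 0 b * (\<Prod>i<m. f (Suc i) (x!i)))"
    unfolding Lm_Suc by (subst sum.reindex[OF inj]) (simp add: case_prod_beta prod.lessThan_Suc_shift del: prod.lessThan_Suc)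
  also have "\<dots> = (\<Sum>b\<in>UNIV. \<Sum>x\<in>Lm m. f 0 b * (\<Prod>i<m. f (Suc i) (x!i)))"
    by (simp add: sum.cartesian_product)
  also have "\<dots> = (\<Sum>b\<in>UNIV. f 0 b * (\<Prod>i<m. f (Suc i) True + f (Suc i) False))"
    by (simp add: sum_distrib_left[symmetric] Suc.IH[of "\<lambda>i. f (Suc i)"])
  also have "\<dots> = (\<Prod>i<Suc m. f i True + f i False)"
    by (simp add: UNIV_bool prod.lessThan_Suc_shift algebra_simps del: prod.lessThan_Suc)
  finally show ?case .
qed

definition sub :: "bool list \<Rightarrow> bool list \<Rightarrow> bool" where
  "sub u p \<longleftrightarrow> (\<forall>i<length u. u!i \<longrightarrow> p!i)"

lemma of_bool_all: "(of_bool (\<forall>i<(m::nat). P i) :: 'a::comm_semiring_1) = (\<Prod>i<m. of_bool (P i))"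
proof (induction m)
  case (Suc m)
  have "(\<forall>i<Suc m. P i) \<longleftrightarrow> (\<forall>i<m. P i) \<and> P m" by (auto simp: less_Suc_eq)
  then have "(of_bool (\<forall>i<Suc m. P i) :: 'a) = of_bool (\<forall>i<m. P i) * of_bool (P m)" by simp
  then show ?case using Suc by simp
qed simp

lemma patcoef_eq: "length u = length p \<Longrightarrow> patcoef p u = (\<Prod>i<length p. lcoef (p ! i) (u ! i))"
  by (simp add: patcoef_def)

lemma M1:
  assumes "u \<in> Lm m" "x \<in> Lm m"
  shows "(\<Sum>p\<in>Lm m. of_bool (sub u p) * patcoef p x) = (of_bool (x = u) :: int)"
proof -
  have "(\<Sum>p\<in>Lm m. of_bool (sub u p) * patcoef p x)
      = (\<Sum>p\<in>Lm m. \<Prod>i<m. of_bool (u!i \<longrightarrow> p!i) * lcoef (p!i) (x!i))"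
    apply (rule sum.cong[OF refl])
    using assms by (simp add: Lm_def sub_def of_bool_all patcoef_eq prod.distrib)
  also have "\<dots> = (\<Prod>i<m. of_bool (x!i = u!i))"
    by (subst sum_prod_lists) (auto intro!: prod.cong simp: lcoef_def)
  also have "\<dots> = of_bool (x = u)"
    using assms by (simp add: of_bool_all[symmetric] Lm_def list_eq_iff_nth_eq)
  finally show ?thesis .
qed

lemma M2:
  assumes "p \<in> Lm m"
  shows "(\<Sum>x\<in>Lm m. of_bool (sub x p) * patcoef q x) = (of_bool (q = p) :: int)"
proof (cases "length q = m")
  case False
  then have "q \<noteq> p" using assms by (auto simp: Lm_def)
  then show ?thesis using False by (auto intro!: sum.neutral simp: Lm_def patcoef_def)
next
  case True
  have "(\<Sum>x\<in>Lm m. of_bool (sub x p) * patcoef q x)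
      = (\<Sum>x\<in>Lm m. \<Prod>i<m. of_bool (x!i \<longrightarrow> p!i) * lcoef (q!i) (x!i))"
    apply (rule sum.cong[OF refl])
    using assms True by (simp add: Lm_def sub_def of_bool_all patcoef_eq prod.distrib)
  also have "\<dots> = (\<Prod>i<m. of_bool (q!i = p!i))"
    by (subst sum_prod_lists) (auto intro!: prod.cong simp: lcoef_def)
  also have "\<dots> = of_bool (q = p)"
    using assms True by (simp add: of_bool_all[symmetric] Lm_def list_eq_iff_nth_eq)
  finally show ?thesis .
qed

definition G :: "bool list \<Rightarrow> int fps" where
  "G p = (\<Prod>i<length p. if p!i then fps_X ^ Suc i else 1 - fps_X ^ Suc i)"

lemma L2:
  assumes "u \<in> Lm m"
  shows "(\<Sum>p\<in>Lm m. of_bool (sub u p) * G p) = fps_X ^ maj_exp u"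
proof -
  have "(\<Sum>p\<in>Lm m. of_bool (sub u p) * G p)
      = (\<Sum>p\<in>Lm m. \<Prod>i<m. of_bool (u!i \<longrightarrow> p!i) * (if p!i then fps_X ^ Suc i else 1 - fps_X ^ Suc i))"
    apply (rule sum.cong[OF refl])
    using assms by (simp add: Lm_def sub_def of_bool_all G_def prod.distrib)
  also have "\<dots> = (\<Prod>i<m. fps_X ^ (if u!i then Suc i else 0))"
    by (subst sum_prod_lists) (auto intro!: prod.cong)
  also have "\<dots> = fps_X ^ maj_exp u"
    using assms by (auto simp: maj_exp_def power_sum Lm_def intro!: prod.cong)
  finally show ?thesis .
qed



definition wsum :: "nat list \<Rightarrow> nat list \<Rightarrow> nat" where
  "wsum \<alpha> j = (\<Sum>i<length \<alpha>. \<alpha>!i * j!i)"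

definition W :: "nat list \<Rightarrow> nat \<Rightarrow> nat list set" where
  "W \<alpha> m = {j. length j = length \<alpha> \<and> sorted_wrt (<) j \<and> wsum \<alpha> j = m}"

lemma psM_nth: "psM \<alpha> $ m = int (card (W \<alpha> m))"
  by (simp add: psM_def W_def wsum_def)

lemma wsum_cons: "wsum (k#\<gamma>) (x#t) = k*x + wsum \<gamma> t"
  by (simp add: wsum_def sum.lessThan_Suc_shift del: sum.lessThan_Suc)

lemma wsum_Suc: "length j = length \<alpha> \<Longrightarrow> wsum \<alpha> (map Suc j) = wsum \<alpha> j + sum_list \<alpha>"
  by (simp add: wsum_def sum_list_sum_nth atLeast0LessThan sum.distrib algebra_simps)

lemma finite_W: assumes "0 \<notin> set \<alpha>" shows "finite (W \<alpha> m)"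
proof (rule finite_subset[OF _ finite_lists_length_eq[OF finite_atLeastAtMost[of 0 m]]])
  show "W \<alpha> m \<subseteq> {xs. set xs \<subseteq> {0..m} \<and> length xs = length \<alpha>}"
  proof
    fix j assume j: "j \<in> W \<alpha> m"
    have "\<forall>y\<in>set j. y \<le> m"
    proof
      fix y assume "y \<in> set j"
      then obtain i where i: "i < length j" "y = j!i" by (auto simp: in_set_conv_nth)
      have il: "i < length \<alpha>" using i j by (simp add: W_def)
      then have "\<alpha>!i \<ge> 1" using assms by (metis less_one not_le nth_mem)
      then have "j!i \<le> \<alpha>!i * j!i" by simp
      also have "\<dots> \<le> wsum \<alpha> j" unfolding wsum_def
        by (rule member_le_sum) (use il in auto)
      finally show "y \<le> m" using i j by (simp add: W_def)
    qed
    then show "j \<in> {xs. set xs \<subseteq> {0..m} \<and> length xs = length \<alpha>}" using j by (auto simp: W_def)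
  qed
qed

lemma map_Suc_pred: "\<forall>y\<in>set j. y \<noteq> 0 \<Longrightarrow> map Suc (map (\<lambda>y. y - 1) j) = j"
  unfolding map_map by (rule map_idI) auto

lemma card_W_cons:
  assumes "0 \<notin> set (k#\<gamma>)"
  shows "card (W (k#\<gamma>) m) =
    (if k + sum_list \<gamma> \<le> m then card (W (k#\<gamma>) (m - (k + sum_list \<gamma>))) else 0) +
    (if sum_list \<gamma> \<le> m then card (W \<gamma> (m - sum_list \<gamma>)) else 0)"
proof -
  define \<alpha> where "\<alpha> = k#\<gamma>"
  define N where "N = k + sum_list \<gamma>"
  define s where "s = sum_list \<gamma>"
  have N: "N = sum_list \<alpha>" by (simp add: N_def \<alpha>_def)
  define A where "A = {j\<in>W \<alpha> m. hd j = 0}"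
  define B where "B = {j\<in>W \<alpha> m. hd j \<noteq> 0}"
  have fin: "finite (W \<alpha> m)" using assms finite_W \<alpha>_def by blast
  have "W \<alpha> m = A \<union> B" "A \<inter> B = {}" by (auto simp: A_def B_def)
  then have cardW: "card (W \<alpha> m) = card A + card B"
    using fin by (metis card_Un_disjoint finite_Un)
  have B_sub: "N \<le> m \<and> j \<in> map Suc ` W \<alpha> (m - N)" if "j \<in> B" for j
  proof -
    have j: "length j = length \<alpha>" "sorted_wrt (<) j" "wsum \<alpha> j = m" "hd j \<noteq> 0"
      using that by (auto simp: B_def W_def)
    obtain x t where jt: "j = x # t" using j(1) \<alpha>_def by (cases j) auto
    have pos: "\<forall>y\<in>set j. y \<noteq> 0" using j(2,4) jt by auto
    define j' where "j' = map (\<lambda>y. y - 1) j"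
    have jj: "j = map Suc j'" using map_Suc_pred[OF pos] by (simp add: j'_def)
    have l: "length j' = length \<alpha>" using j(1) by (simp add: j'_def)
    have so: "sorted_wrt (<) j'" using j(2) unfolding jj by (simp add: sorted_wrt_map)
    have "wsum \<alpha> j = wsum \<alpha> j' + N" unfolding jj N by (rule wsum_Suc[OF l])
    then have "N \<le> m" "wsum \<alpha> j' = m - N" using j(3) by auto
    then show ?thesis using l so jj by (auto simp: W_def)
  qed
  have B_sup: "map Suc j' \<in> B" if "N \<le> m" "j' \<in> W \<alpha> (m - N)" for j'
  proof -
    have j: "length j' = length \<alpha>" "sorted_wrt (<) j'" "wsum \<alpha> j' = m - N"
      using that by (auto simp: W_def)
    have "wsum \<alpha> (map Suc j') = m" using wsum_Suc[OF j(1)] j(3) that(1) N by simp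
    moreover obtain x t where "j' = x # t" using j(1) \<alpha>_def by (cases j') auto
    ultimately show ?thesis using j by (auto simp: B_def W_def sorted_wrt_map)
  qed
  have cardB: "card B = (if N \<le> m then card (W \<alpha> (m - N)) else 0)"
  proof (cases "N \<le> m")
    case True
    have "B = map Suc ` W \<alpha> (m - N)" using B_sub B_sup True by blast
    moreover have i: "inj (map Suc)" by (simp add: inj_mapI)
    ultimately show ?thesis using True by (simp add: card_image[OF inj_on_subset[OF i subset_UNIV]])
  next
    case False
    then have "B = {}" using B_sub by blast
    then show ?thesis using False by simp
  qed
  have A_sub: "s \<le> m \<and> j \<in> (\<lambda>t. 0 # map Suc t) ` W \<gamma> (m - s)" if "j \<in> A" for j
  proof -
    have j: "length j = length \<alpha>" "sorted_wrt (<) j" "wsum \<alpha> j = m" "hd j = 0"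
      using that by (auto simp: A_def W_def)
    obtain t where jt: "j = 0 # t" using j(1,4) \<alpha>_def by (cases j) auto
    have pos: "\<forall>y\<in>set t. y \<noteq> 0" using j(2) jt by auto
    define t' where "t' = map (\<lambda>y. y - 1) t"
    have tt: "t = map Suc t'" using map_Suc_pred[OF pos] by (simp add: t'_def)
    have l: "length t' = length \<gamma>" using j(1) jt \<alpha>_def by (simp add: t'_def)
    have so: "sorted_wrt (<) t'" using j(2) unfolding jt tt by (simp add: sorted_wrt_map)
    have "wsum \<alpha> j = wsum \<gamma> t' + s" unfolding jt tt \<alpha>_def wsum_cons s_def
      using wsum_Suc[OF l] by simp
    then have "s \<le> m" "wsum \<gamma> t' = m - s" using j(3) by auto
    then show ?thesis using l so jt tt by (auto simp: W_def)
  qed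
  have A_sup: "0 # map Suc t \<in> A" if "s \<le> m" "t \<in> W \<gamma> (m - s)" for t
  proof -
    have j: "length t = length \<gamma>" "sorted_wrt (<) t" "wsum \<gamma> t = m - s"
      using that by (auto simp: W_def)
    have "wsum \<alpha> (0 # map Suc t) = m" unfolding \<alpha>_def wsum_cons
      using wsum_Suc[OF j(1)] j(3) that(1) s_def by simp
    then show ?thesis using j by (auto simp: A_def W_def sorted_wrt_map \<alpha>_def)
  qed
  have cardA: "card A = (if s \<le> m then card (W \<gamma> (m - s)) else 0)"
  proof (cases "s \<le> m")
    case True
    have "A = (\<lambda>t. 0 # map Suc t) ` W \<gamma> (m - s)" using A_sub A_sup True by blast
    moreover have i: "inj (\<lambda>t. 0 # map Suc t)" by (auto simp: inj_on_def)
    ultimately show ?thesis using True by (simp add: card_image[OF inj_on_subset[OF i subset_UNIV]])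
  next
    case False
    then have "A = {}" using A_sub by blast
    then show ?thesis using False by simp
  qed
  show ?thesis using cardW cardA cardB unfolding \<alpha>_def N_def s_def by simp
qed

lemma psM_Nil: "psM [] = 1"
proof (rule fps_ext)
  fix m
  have "W [] m = (if m = 0 then {[]} else {})" by (auto simp: W_def wsum_def)
  then show "psM [] $ m = 1 $ m" by (simp add: psM_nth)
qed

lemma P1:
  assumes "0 \<notin> set (k#\<gamma>)"
  shows "(1 - fps_X ^ (k + sum_list \<gamma>)) * psM (k#\<gamma>) = fps_X ^ sum_list \<gamma> * psM \<gamma>"
proof (rule fps_ext)
  fix m
  show "((1 - fps_X ^ (k + sum_list \<gamma>)) * psM (k#\<gamma>)) $ m = (fps_X ^ sum_list \<gamma> * psM \<gamma>) $ m"
    using card_W_cons[OF assms, of m]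
    by (simp add: ring_distribs fps_X_power_mult_nth psM_nth not_less)
qed



definition Sp :: "nat list \<Rightarrow> nat set" where
  "Sp \<beta> = (\<lambda>l. sum_list (take l \<beta>)) ` {1..<length \<beta>}"

lemma Sp_single: "Sp [k] = {}" by (simp add: Sp_def)

lemma Sp_snoc: assumes "\<beta> \<noteq> []" shows "Sp (\<beta> @ [k]) = insert (sum_list \<beta>) (Sp \<beta>)"
proof -
  have "{1..<length (\<beta> @ [k])} = insert (length \<beta>) {1..<length \<beta>}"
    using assms by (cases \<beta>) auto
  moreover have "sum_list (take l (\<beta> @ [k])) = sum_list (take l \<beta>)" if "l \<le> length \<beta>" for l
    using that by simp
  ultimately show ?thesis unfolding Sp_def by (auto simp: image_iff)
qed

lemma Sp_cons: assumes "\<beta> \<noteq> []" shows "Sp (k # \<beta>) = insert k ((+) k ` Sp \<beta>)"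
proof -
  have seq: "{1..<length (k # \<beta>)} = insert 1 (Suc ` {1..<length \<beta>})"
  proof (rule set_eqI)
    fix x show "x \<in> {1..<length (k # \<beta>)} \<longleftrightarrow> x \<in> insert 1 (Suc ` {1..<length \<beta>})"
      using assms by (cases x) (auto simp: image_iff)
  qed
  show ?thesis unfolding Sp_def seq image_insert image_image by simp
qed

lemma Sp_bound: assumes "is_comp \<beta>" shows "Sp \<beta> \<subseteq> {1..<sum_list \<beta>}"
proof
  fix x assume "x \<in> Sp \<beta>"
  then obtain l where l: "1 \<le> l" "l < length \<beta>" "x = sum_list (take l \<beta>)" by (auto simp: Sp_def)
  have z: "0 \<notin> set \<beta>" using assms by (simp add: is_comp_def)
  have "take l \<beta> ! 0 = \<beta> ! 0" "0 < length (take l \<beta>)" using l by auto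
  then have "\<beta> ! 0 \<in> set (take l \<beta>)" by (metis nth_mem)
  then have "\<beta> ! 0 \<le> x" using l member_le_sum_list by blast
  moreover have "\<beta> ! 0 \<in> set \<beta>" using l by (intro nth_mem) auto
  then have "\<beta> ! 0 \<noteq> 0" using z by metis
  then have "\<beta> ! 0 \<ge> 1" by simp
  moreover have "drop l \<beta> ! 0 = \<beta> ! l" "0 < length (drop l \<beta>)" using l by auto
  then have "\<beta> ! l \<in> set (drop l \<beta>)" by (metis nth_mem)
  then have "\<beta> ! l \<le> sum_list (drop l \<beta>)" using member_le_sum_list by blast
  moreover have "\<beta> ! l \<in> set \<beta>" using l by (intro nth_mem) auto
  then have "\<beta> ! l \<noteq> 0" using z by metis
  then have "\<beta> ! l \<ge> 1" by simp
  moreover have "sum_list \<beta> = x + sum_list (drop l \<beta>)" using l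
    by (metis append_take_drop_id sum_list_append)
  ultimately show "x \<in> {1..<sum_list \<beta>}" by auto
qed

lemma vpat_nth:
  "is_comp \<beta> \<Longrightarrow> i < length (vpat \<beta>) \<Longrightarrow> (vpat \<beta> ! i \<longleftrightarrow> Suc i \<in> Sp \<beta>)"
proof (induction \<beta> arbitrary: i rule: vpat.induct)
  case 1 then show ?case by (simp add: is_comp_def)
next
  case (2 k) then show ?case by (simp add: Sp_single)
next
  case (3 k l ls)
  have c: "is_comp (l # ls)" using 3(2) by (auto simp: is_comp_def)
  have k: "k \<ge> 1" using 3(2) by (auto simp: is_comp_def)
  have bnd: "Sp (l#ls) \<subseteq> {1..<sum_list (l#ls)}" by (rule Sp_bound[OF c])
  have Sp: "Sp (k # l # ls) = insert k ((+) k ` Sp (l#ls))" by (rule Sp_cons) simp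
  show ?case
  proof (cases "i < k - 1")
    case True
    then have "Suc i \<notin> Sp (k # l # ls)" unfolding Sp using bnd by auto
    then show ?thesis using True by (simp add: nth_append)
  next
    case False
    show ?thesis
    proof (cases "i = k - 1")
      case True
      then show ?thesis using k by (simp add: nth_append Sp)
    next
      case F2: False
      then have ii: "i - (k - 1) = Suc (i - k)" using False k by auto
      have lt: "i - k < length (vpat (l#ls))" using 3(3) False F2 k by auto
      have "vpat (k # l # ls) ! i = vpat (l#ls) ! (i - k)"
        using False ii by (simp add: nth_append)
      also have "\<dots> \<longleftrightarrow> Suc (i - k) \<in> Sp (l#ls)" using 3(1)[OF c lt] .
      also have "\<dots> \<longleftrightarrow> Suc i \<in> Sp (k # l # ls)"
      proof -
        have e: "Suc i = k + Suc (i - k)" using False F2 k by arith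
        have ne: "Suc i \<noteq> k" using False F2 k by arith
        have "Suc i \<in> Sp (k # l # ls) \<longleftrightarrow> k + Suc (i - k) \<in> insert k ((+) k ` Sp (l#ls))"
          by (simp only: Sp e)
        also have "\<dots> \<longleftrightarrow> Suc (i - k) \<in> Sp (l#ls)" by auto
        finally show ?thesis by simp
      qed
      finally show ?thesis .
    qed
  qed
qed



definition Pr :: "nat \<Rightarrow> int fps" where
  "Pr n = (\<Prod>i\<in>{1..<Suc n}. 1 - fps_X ^ i)"

lemma L1:
  "is_comp \<beta> \<Longrightarrow> Pr (sum_list \<beta>) * psM (rev \<beta>) =
     (\<Prod>i\<in>{1..<sum_list \<beta>}. if i \<in> Sp \<beta> then fps_X ^ i else 1 - fps_X ^ i)"
proof (induction \<beta> rule: rev_induct)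
  case Nil then show ?case by (simp add: is_comp_def)
next
  case (snoc k \<beta>)
  have k: "k \<ge> 1" using snoc(2) by (auto simp: is_comp_def)
  show ?case
  proof (cases "\<beta> = []")
    case True
    have "(1 - fps_X ^ (k + sum_list [])) * psM [k] = fps_X ^ sum_list [] * psM []"
      by (rule P1) (use k in auto)
    then have e: "(1 - fps_X ^ k) * psM [k] = 1" by (simp add: psM_Nil)
    have "Pr k = (\<Prod>i\<in>{1..<k}. 1 - fps_X ^ i) * (1 - fps_X ^ k)"
      using k by (simp add: Pr_def)
    then show ?thesis using True e by (simp add: Sp_single mult.assoc)
  next
    case False
    have c: "is_comp \<beta>" using snoc(2) False by (auto simp: is_comp_def)
    define b where "b = sum_list \<beta>"
    have b: "b \<ge> 1" using sum_comp_pos[OF c] b_def by simp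
    have n: "sum_list (\<beta> @ [k]) = b + k" by (simp add: b_def)
    have P: "(1 - fps_X ^ (k + b)) * psM (k # rev \<beta>) = fps_X ^ b * psM (rev \<beta>)"
      using P1[of k "rev \<beta>"] snoc(2) by (auto simp: is_comp_def b_def)
    define T where "T = (\<Prod>i\<in>{Suc b..<b+k}. 1 - fps_X ^ i :: int fps)"
    have sp: "(\<Prod>i\<in>{1..<b+k}. 1 - fps_X ^ i :: int fps) = Pr b * T"
      unfolding Pr_def T_def using k by (intro prod.atLeastLessThan_concat[symmetric]) auto
    have "Pr (b + k) = Pr b * T * (1 - fps_X ^ (b + k))"
      unfolding Pr_def using k sp[unfolded Pr_def] by simp
    then have LHS: "Pr (b + k) * psM (rev (\<beta> @ [k])) = T * fps_X ^ b * (Pr b * psM (rev \<beta>))"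
      using P by (simp add: ac_simps)
    have bnd: "Sp \<beta> \<subseteq> {1..<b}" using Sp_bound[OF c] b_def by simp
    define f where "f = (\<lambda>i. if i \<in> Sp (\<beta> @ [k]) then fps_X ^ i else 1 - fps_X ^ i :: int fps)"
    have Sp: "Sp (\<beta> @ [k]) = insert b (Sp \<beta>)" using Sp_snoc[OF False] b_def by simp
    have sp2: "(\<Prod>i\<in>{1..<b+k}. f i) = (\<Prod>i\<in>{1..<Suc b}. f i) * (\<Prod>i\<in>{Suc b..<b+k}. f i)"
      using k b by (intro prod.atLeastLessThan_concat[symmetric]) auto
    have "(\<Prod>i\<in>{1..<b+k}. f i) = (\<Prod>i\<in>{1..<b}. f i) * f b * (\<Prod>i\<in>{Suc b..<b+k}. f i)"
      unfolding sp2 using b by simp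
    also have "(\<Prod>i\<in>{1..<b}. f i) = (\<Prod>i\<in>{1..<b}. if i \<in> Sp \<beta> then fps_X ^ i else 1 - fps_X ^ i)"
      by (rule prod.cong) (auto simp: f_def Sp)
    also have "f b = fps_X ^ b" by (simp add: f_def Sp)
    also have "(\<Prod>i\<in>{Suc b..<b+k}. f i) = T"
      unfolding T_def by (rule prod.cong) (use bnd in \<open>auto simp: f_def Sp\<close>)
    finally have RHS: "(\<Prod>i\<in>{1..<b+k}. f i) = T * fps_X ^ b * (Pr b * psM (rev \<beta>))"
      using snoc(1)[OF c] b_def by (simp add: ac_simps)
    show ?thesis using LHS RHS n unfolding f_def by simp
  qed
qed



lemma fps_const_sum': "fps_const (sum f A) = (\<Sum>x\<in>A. fps_const (f x))"
  by (induction A rule: infinite_finite_induct) (auto simp: fps_const_add[symmetric])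

lemma fps_const_of_bool: "fps_const (of_bool b :: int) = of_bool b"
  by (cases b) auto

definition cw :: "ncpoly \<Rightarrow> nat \<Rightarrow> nat list \<Rightarrow> int" where
  "cw w m \<beta> = (if \<beta> \<in> Cn (Suc m) then (\<Sum>u\<in>Lm m. w u * of_bool (sub u (vpat \<beta>))) else 0)"

definition cp :: "ncpoly \<Rightarrow> nat \<Rightarrow> bool list \<Rightarrow> int" where
  "cp w m p = (\<Sum>u\<in>Lm m. w u * of_bool (sub u p))"

lemma cw_cp: "\<beta> \<in> Cn (Suc m) \<Longrightarrow> cw w m \<beta> = cp w m (vpat \<beta>)"
  by (simp add: cw_def cp_def)

lemma supp_cw: "{\<beta>. cw w m \<beta> \<noteq> 0} \<subseteq> Cn (Suc m)"
  by (auto simp: cw_def split: if_splits)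

lemma homog_Lm: "homogeneous m w \<Longrightarrow> w u \<noteq> 0 \<Longrightarrow> u \<in> Lm m"
  by (simp add: homogeneous_def Lm_def)

lemma vpat_Lm: "\<beta> \<in> Cn (Suc m) \<Longrightarrow> vpat \<beta> \<in> Lm m"
  using bij_vpat[of m] by (auto simp: bij_betw_def)

lemma cw_repr:
  assumes h: "homogeneous m w"
  shows "w x = (\<Sum>\<beta>\<in>{\<beta>. cw w m \<beta> \<noteq> 0}. cw w m \<beta> * v_comp \<beta> x)"
proof -
  have "(\<Sum>\<beta>\<in>{\<beta>. cw w m \<beta> \<noteq> 0}. cw w m \<beta> * v_comp \<beta> x) = (\<Sum>\<beta>\<in>Cn (Suc m). cw w m \<beta> * v_comp \<beta> x)"
    by (rule sum.mono_neutral_left[OF finite_Cn supp_cw]) auto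
  also have "\<dots> = (\<Sum>\<beta>\<in>Cn (Suc m). cp w m (vpat \<beta>) * patcoef (vpat \<beta>) x)"
    by (rule sum.cong) (auto simp: cw_cp v_comp_def)
  also have "\<dots> = (\<Sum>p\<in>Lm m. cp w m p * patcoef p x)"
    by (rule sum.reindex_bij_betw[OF bij_vpat])
  also have "\<dots> = (\<Sum>u\<in>Lm m. w u * (\<Sum>p\<in>Lm m. of_bool (sub u p) * patcoef p x))"
    unfolding cp_def sum_distrib_left sum_distrib_right
    by (subst sum.swap) (simp add: ac_simps)
  also have "\<dots> = w x"
  proof (cases "x \<in> Lm m")
    case True
    have "(\<Sum>u\<in>Lm m. w u * (\<Sum>p\<in>Lm m. of_bool (sub u p) * patcoef p x)) = (\<Sum>u\<in>Lm m. w u * of_bool (x = u))"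
      by (rule sum.cong) (use True M1 in auto)
    also have "\<dots> = w x" using True finite_Lm by (simp add: of_bool_def if_distrib sum.delta' cong: if_cong)
    finally show ?thesis .
  next
    case False
    have "w x = 0" using False homog_Lm[OF h] by blast
    moreover have "patcoef p x = 0" if "p \<in> Lm m" for p using False that by (simp add: patcoef_def Lm_def)
    ultimately show ?thesis by simp
  qed
  finally show ?thesis by simp
qed

definition valid :: "ncpoly \<Rightarrow> qsym \<Rightarrow> bool" where
  "valid w c \<longleftrightarrow> finite {\<alpha>. c \<alpha> \<noteq> 0} \<and> (\<forall>\<alpha>. c \<alpha> \<noteq> 0 \<longrightarrow> is_comp \<alpha>) \<and>
                 (\<forall>u. w u = (\<Sum>\<alpha>\<in>{\<alpha>. c \<alpha> \<noteq> 0}. c \<alpha> * v_comp \<alpha> u))"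

lemma valid_cw: "homogeneous m w \<Longrightarrow> valid w (cw w m)"
  unfolding valid_def using cw_repr[of m w] supp_cw[of w m] finite_subset[OF supp_cw finite_Cn]
  by (auto simp: Cn_def)

lemma U:
  assumes v: "valid w c" and b: "is_comp \<beta>0"
  shows "c \<beta>0 = (\<Sum>x\<in>Lm (length (vpat \<beta>0)). of_bool (sub x (vpat \<beta>0)) * w x)"
proof -
  define F where "F = {\<alpha>. c \<alpha> \<noteq> 0}"
  define p0 where "p0 = vpat \<beta>0"
  define L where "L = Lm (length p0)"
  have fF: "finite F" using v by (simp add: valid_def F_def)
  have cF: "\<alpha> \<in> F \<Longrightarrow> is_comp \<alpha>" for \<alpha> using v by (simp add: valid_def F_def)
  have w: "w x = (\<Sum>\<alpha>\<in>F. c \<alpha> * patcoef (vpat \<alpha>) x)" for x using v by (simp add: valid_def F_def v_comp_def)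
  have "(\<Sum>x\<in>L. of_bool (sub x p0) * w x) = (\<Sum>\<alpha>\<in>F. c \<alpha> * (\<Sum>x\<in>L. of_bool (sub x p0) * patcoef (vpat \<alpha>) x))"
    unfolding w sum_distrib_left sum_distrib_right by (subst sum.swap) (simp add: ac_simps)
  also have "\<dots> = (\<Sum>\<alpha>\<in>F. c \<alpha> * of_bool (\<alpha> = \<beta>0))"
  proof (rule sum.cong[OF refl])
    fix \<alpha> assume "\<alpha> \<in> F"
    have "(\<Sum>x\<in>L. of_bool (sub x p0) * patcoef (vpat \<alpha>) x) = of_bool (vpat \<alpha> = p0)"
      unfolding L_def by (rule M2) (simp add: Lm_def)
    also have "(vpat \<alpha> = p0) = (\<alpha> = \<beta>0)"
      using unpat_vpat[OF cF[OF \<open>\<alpha> \<in> F\<close>]] unpat_vpat[OF b] p0_def by metis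
    finally show "c \<alpha> * (\<Sum>x\<in>L. of_bool (sub x p0) * patcoef (vpat \<alpha>) x) = c \<alpha> * of_bool (\<alpha> = \<beta>0)" by simp
  qed
  also have "\<dots> = c \<beta>0" using fF by (simp add: of_bool_def if_distrib sum.delta' F_def cong: if_cong)
  finally show ?thesis by (simp add: L_def p0_def)
qed

lemma gamma_eq: assumes h: "homogeneous m w" shows "gamma w = cw w m"
  unfolding gamma_def
proof (rule the_equality)
  show "finite {\<alpha>. cw w m \<alpha> \<noteq> 0} \<and> (\<forall>\<alpha>. cw w m \<alpha> \<noteq> 0 \<longrightarrow> is_comp \<alpha>) \<and>
        (\<forall>u. w u = (\<Sum>\<alpha>\<in>{\<alpha>. cw w m \<alpha> \<noteq> 0}. cw w m \<alpha> * v_comp \<alpha> u))"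
    using valid_cw[OF h] by (simp add: valid_def)
next
  fix c assume "finite {\<alpha>. c \<alpha> \<noteq> 0} \<and> (\<forall>\<alpha>. c \<alpha> \<noteq> 0 \<longrightarrow> is_comp \<alpha>) \<and>
        (\<forall>u. w u = (\<Sum>\<alpha>\<in>{\<alpha>. c \<alpha> \<noteq> 0}. c \<alpha> * v_comp \<alpha> u))"
  then have v: "valid w c" by (simp add: valid_def)
  have v2: "valid w (cw w m)" by (rule valid_cw[OF h])
  show "c = cw w m"
  proof
    fix \<beta> show "c \<beta> = cw w m \<beta>"
    proof (cases "is_comp \<beta>")
      case True then show ?thesis using U[OF v True] U[OF v2 True] by simp
    next
      case False then show ?thesis using v v2 unfolding valid_def by metis
    qed
  qed
qed



lemma L1G:
  assumes "\<beta> \<in> Cn (Suc m)"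
  shows "(\<Prod>i\<in>{1..<Suc m}. if i \<in> Sp \<beta> then fps_X ^ i else 1 - fps_X ^ i) = G (vpat \<beta>)"
proof -
  have c: "is_comp \<beta>" and l: "length (vpat \<beta>) = m"
    using assms length_vpat[of \<beta>] by (auto simp: Cn_def)
  have "{1..<Suc m} = Suc ` {..<m}" by (simp add: lessThan_atLeast0)
  then have "(\<Prod>i\<in>{1..<Suc m}. if i \<in> Sp \<beta> then fps_X ^ i else 1 - fps_X ^ i :: int fps)
     = (\<Prod>i<m. if Suc i \<in> Sp \<beta> then fps_X ^ Suc i else 1 - fps_X ^ Suc i)"
    by (simp add: prod.reindex)
  also have "\<dots> = G (vpat \<beta>)" unfolding G_def l
    by (rule prod.cong) (use vpat_nth[OF c] l in auto)
  finally show ?thesis .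
qed

lemma Pr_ps:
  assumes h: "homogeneous m w"
  shows "Pr (Suc m) * ps_star (cw w m) = (\<Sum>u\<in>Lm m. fps_const (w u) * fps_X ^ maj_exp u)"
proof -
  define c where "c = cw w m"
  have "ps_star c = (\<Sum>\<alpha>\<in>{\<alpha>. c (rev \<alpha>) \<noteq> 0}. fps_const (c (rev \<alpha>)) * psM \<alpha>)"
    by (simp add: ps_star_def ps_def qsym_rev_def)
  also have "\<dots> = (\<Sum>\<beta>\<in>{\<beta>. c \<beta> \<noteq> 0}. fps_const (c \<beta>) * psM (rev \<beta>))"
    by (rule sum.reindex_bij_witness[of _ rev rev]) auto
  also have "\<dots> = (\<Sum>\<beta>\<in>Cn (Suc m). fps_const (c \<beta>) * psM (rev \<beta>))"
    by (rule sum.mono_neutral_left[OF finite_Cn]) (use supp_cw in \<open>auto simp: c_def\<close>)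
  finally have "Pr (Suc m) * ps_star c = (\<Sum>\<beta>\<in>Cn (Suc m). fps_const (c \<beta>) * (Pr (Suc m) * psM (rev \<beta>)))"
    by (simp add: sum_distrib_left ac_simps)
  also have "\<dots> = (\<Sum>\<beta>\<in>Cn (Suc m). fps_const (cp w m (vpat \<beta>)) * G (vpat \<beta>))"
  proof (rule sum.cong[OF refl])
    fix \<beta> assume b: "\<beta> \<in> Cn (Suc m)"
    then have "sum_list \<beta> = Suc m" "is_comp \<beta>" by (auto simp: Cn_def)
    then have "Pr (Suc m) * psM (rev \<beta>) = G (vpat \<beta>)" using L1[of \<beta>] L1G[OF b] by simp
    then show "fps_const (c \<beta>) * (Pr (Suc m) * psM (rev \<beta>)) = fps_const (cp w m (vpat \<beta>)) * G (vpat \<beta>)"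
      using cw_cp[OF b] c_def by simp
  qed
  also have "\<dots> = (\<Sum>p\<in>Lm m. fps_const (cp w m p) * G p)"
    by (rule sum.reindex_bij_betw[OF bij_vpat])
  also have "\<dots> = (\<Sum>u\<in>Lm m. fps_const (w u) * (\<Sum>p\<in>Lm m. of_bool (sub u p) * G p))"
    unfolding cp_def fps_const_sum' sum_distrib_left sum_distrib_right fps_const_mult[symmetric] fps_const_of_bool
    by (subst sum.swap) (simp add: ac_simps)
  also have "\<dots> = (\<Sum>u\<in>Lm m. fps_const (w u) * fps_X ^ maj_exp u)"
    by (rule sum.cong) (auto simp: L2)
  finally show ?thesis by (simp add: c_def)
qed

lemma Theta_fps:
  assumes h: "homogeneous m w"
  shows "fps_of_poly (Theta w) = (\<Sum>u\<in>Lm m. fps_const (w u) * fps_X ^ maj_exp u)"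
proof -
  have "fps_of_poly (Theta w) = (\<Sum>u\<in>{u. w u \<noteq> 0}. fps_const (w u) * fps_X ^ maj_exp u)"
    by (simp add: Theta_def fps_of_poly_sum fps_of_poly_monom)
  also have "\<dots> = (\<Sum>u\<in>Lm m. fps_const (w u) * fps_X ^ maj_exp u)"
    by (rule sum.mono_neutral_left[OF finite_Lm]) (use homog_Lm[OF h] in auto)
  finally show ?thesis .
qed

lemma qfact_Pr: "(1 - fps_X) ^ n * fps_of_poly (qfact n) = Pr n"
proof -
  have q: "fps_of_poly (qint i) = (\<Sum>j<i. fps_X ^ j)" for i
    by (simp add: qint_def fps_of_poly_sum fps_of_poly_monom')
  have "(1 - fps_X) ^ n = (\<Prod>i\<in>{1..n}. (1 - fps_X :: int fps))" by simp
  then have "(1 - fps_X) ^ n * fps_of_poly (qfact n) = (\<Prod>i\<in>{1..n}. (1 - fps_X) * (\<Sum>j<i. fps_X ^ j :: int fps))"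
    by (simp add: qfact_def fps_of_poly_prod q prod.distrib)
  also have "\<dots> = (\<Prod>i\<in>{1..n}. 1 - fps_X ^ i)" by (simp add: one_diff_power_eq)
  finally show ?thesis by (simp add: Pr_def atLeastLessThanSuc_atLeastAtMost)
qed

lemma part1:
  assumes "homogeneous m w"
  shows "fps_of_poly (Theta w) = (1 - fps_X) ^ Suc m * fps_of_poly (qfact (Suc m)) * ps_star (gamma w)"
  using Theta_fps[OF assms] Pr_ps[OF assms] gamma_eq[OF assms] qfact_Pr[of "Suc m"] by simp

lemma Psi_homog: "homogeneous (n - 1) (Psi P le \<rho> n)"
  unfolding homogeneous_def Psi_def
proof (intro allI impI)
  fix u assume "(\<Sum>S\<in>Pow {1..n - 1}. int (flag_number P le \<rho> S) * v_set (n - 1) S u) \<noteq> 0"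
  then obtain S where "int (flag_number P le \<rho> S) * v_set (n - 1) S u \<noteq> 0"
    by (rule sum.not_neutral_contains_not_neutral)
  then have "v_set (n - 1) S u \<noteq> 0" by auto
  then show "length u = n - 1" by (simp add: v_set_def patcoef_def split: if_splits)
qed

theorem mainTheorem6:
  fixes n :: nat
  assumes "n \<ge> 1"
  shows "(\<forall>w :: ncpoly. homogeneous (n - 1) w \<longrightarrow>
            fps_of_poly (Theta w) =
              (1 - fps_X) ^ n * fps_of_poly (qfact n) * ps_star (gamma w))
       \<and> (\<forall>(P :: 'a set) le z t \<rho>. graded_poset P le z t \<rho> n \<longrightarrow>
            fps_of_poly (Theta (Psi P le \<rho> n)) =
              (1 - fps_X) ^ n * fps_of_poly (qfact n) * ps_star (Fqs P le \<rho> n))"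
proof -
  have n: "n = Suc (n - 1)" using assms by simp
  have A: "\<forall>w :: ncpoly. homogeneous (n - 1) w \<longrightarrow>
            fps_of_poly (Theta w) = (1 - fps_X) ^ n * fps_of_poly (qfact n) * ps_star (gamma w)"
    using part1[of "n - 1"] n by metis
  show ?thesis unfolding Fqs_def using A Psi_homog by blast
qed


end
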